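(* Let $H$ be a graph with minimum degree $\delta(H)>|V(H)|/2$. Then for every graph $G$, \[ \kappa'(G\times H)=\min\{\,2\kappa'(G)\,e(H),\ \delta(G)\delta(H)\,\}. \]
   Context: All graphs are finite, simple and undirected. $\kappa'(G)$ denotes the edge connectivity of $G$, the minimum number of edges whose removal disconnects $G$; it is $0$ if $G$ is disconnected or has only one vertex. $\delta(\cdot)$ denotes minimum degree and $e(H)=|E(H)|$. The direct product $G\times H$ has vertex set $V(G)\times V(H)$. Two vertices $(x,u),(y,v)$ are adjacent if and only if $xy\in E(G)$ and $uv\in E(H)$. *)

theory Defs
  imports Complex_Main
begin

definition graph :: "'a set \<Rightarrow> 'a set set \<Rightarrow> bool" where
  "graph V E \<longleftrightarrow> finite V \<and> (\<forall>e\<in>E. e \<subseteq> V \<and> card e = 2)"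

definition adj :: "'a set set \<Rightarrow> 'a \<Rightarrow> 'a \<Rightarrow> bool" where
  "adj E u v \<longleftrightarrow> {u, v} \<in> E"

definition connected_graph :: "'a set \<Rightarrow> 'a set set \<Rightarrow> bool" where
  "connected_graph V E \<longleftrightarrow> V \<noteq> {} \<and> (\<forall>u\<in>V. \<forall>v\<in>V. (adj E)\<^sup>*\<^sup>* u v)"

text \<open>Edge connectivity: minimum number of edges whose removal disconnects the graph;
0 if the graph is disconnected or has at most one vertex.\<close>
definition edge_conn :: "'a set \<Rightarrow> 'a set set \<Rightarrow> nat" where
  "edge_conn V E =
     (if card V \<le> 1 then 0
      else Min {card F | F. F \<subseteq> E \<and> \<not> connected_graph V (E - F)})"

definition degree :: "'a set set \<Rightarrow> 'a \<Rightarrow> nat" where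
  "degree E v = card {e \<in> E. v \<in> e}"

definition min_degree :: "'a set \<Rightarrow> 'a set set \<Rightarrow> nat" where
  "min_degree V E = Min (degree E ` V)"

definition prod_verts :: "'a set \<Rightarrow> 'b set \<Rightarrow> ('a \<times> 'b) set" where
  "prod_verts VG VH = VG \<times> VH"

definition prod_edges :: "'a set set \<Rightarrow> 'b set set \<Rightarrow> ('a \<times> 'b) set set" where
  "prod_edges EG EH = {{(x, u), (y, v)} | x y u v. {x, y} \<in> EG \<and> {u, v} \<in> EH}"

end

theory Submission imports Defs begin
definition nbr :: "'a set set \<Rightarrow> 'a \<Rightarrow> 'a set" where "nbr E u = {v. {u,v} \<in> E}"
definition darts :: "'a set set \<Rightarrow> ('a \<times> 'a) set" where "darts E = {(u,v). {u,v} \<in> E}"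
definition ecount :: "'a set set \<Rightarrow> 'a set \<Rightarrow> 'a set \<Rightarrow> nat" where
  "ecount E P Q = card {(u,v). u \<in> P \<and> v \<in> Q \<and> {u,v} \<in> E}"

lemma two_elem: "card e = 2 \<Longrightarrow> \<exists>a b. a \<noteq> b \<and> e = {a,b}"
  by (metis card_2_iff)

lemma graph_finE: "graph V E \<Longrightarrow> finite E"
  unfolding graph_def by (meson Pow_iff finite_Pow_iff rev_finite_subset subsetI)

lemma graph_edge: "graph V E \<Longrightarrow> {u,v} \<in> E \<Longrightarrow> u \<in> V \<and> v \<in> V \<and> u \<noteq> v"
proof -
  assume g: "graph V E" and e: "{u,v} \<in> E"
  have "{u,v} \<subseteq> V" "card {u,v} = 2" using g e unfolding graph_def by auto
  then show ?thesis by (cases "u = v") auto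
qed

lemma nbr_sub: "graph V E \<Longrightarrow> nbr E u \<subseteq> V"
  unfolding nbr_def using graph_edge by fastforce

lemma nbr_fin: "graph V E \<Longrightarrow> finite (nbr E u)"
  using nbr_sub graph_def by (metis rev_finite_subset)

lemma deg_nbr: assumes "graph V E" shows "degree E u = card (nbr E u)"
proof -
  have "bij_betw (\<lambda>v. {u,v}) (nbr E u) {e\<in>E. u \<in> e}"
  proof (rule bij_betwI')
    fix x y assume "x \<in> nbr E u" "y \<in> nbr E u"
    then show "({u, x} = {u, y}) = (x = y)"
      unfolding nbr_def using graph_edge[OF assms] by (metis doubleton_eq_iff)
  next
    fix x assume "x \<in> nbr E u" then show "{u, x} \<in> {e \<in> E. u \<in> e}" unfolding nbr_def by auto
  next
    fix e assume e: "e \<in> {e \<in> E. u \<in> e}"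
    then have "card e = 2" using assms unfolding graph_def by auto
    then obtain a b where "a \<noteq> b" "e = {a,b}" using two_elem by blast
    then show "\<exists>x\<in>nbr E u. e = {u, x}" using e unfolding nbr_def
      by (auto simp: insert_commute)
  qed
  then show ?thesis unfolding degree_def by (simp add: bij_betw_same_card)
qed

lemma darts_card: assumes "graph V E" "F \<subseteq> E" shows "card (darts F) = 2 * card F"
proof -
  have fin: "finite F" using graph_finE[OF assms(1)] assms(2) finite_subset by blast
  have eq: "darts F = (\<Union>e\<in>F. {(u,v). e = {u,v}})" unfolding darts_def by auto
  have c2: "card {(u,v). e = {u,v}} = 2" if "e \<in> F" for e
  proof -
    have "card e = 2" using that assms unfolding graph_def by auto
    then obtain a b where ab: "a \<noteq> b" "e = {a,b}" using two_elem by blast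
    then have "{(u,v). e = {u,v}} = {(a,b),(b,a)}" by (auto simp: doubleton_eq_iff)
    then show ?thesis using ab by simp
  qed
  have fin2: "finite {(u,v). e = {u,v}}" if "e \<in> F" for e
    using c2[OF that] by (metis card.infinite zero_neq_numeral)
  have "card (darts F) = (\<Sum>e\<in>F. card {(u,v). e = {u,v}})"
    unfolding eq
    apply (rule card_UN_disjoint[OF fin])
    using fin2 apply blast
    by auto
  also have "\<dots> = 2 * card F" using c2 by simp
  finally show ?thesis .
qed

lemma ecount_sym: "ecount E P Q = ecount E Q P"
proof -
  have "{(u,v). u \<in> P \<and> v \<in> Q \<and> {u,v} \<in> E} = (\<lambda>(a,b). (b,a)) ` {(u,v). u \<in> Q \<and> v \<in> P \<and> {u,v} \<in> E}"
    by (auto simp: insert_commute image_iff)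
  moreover have "inj_on (\<lambda>(a,b). (b,a)) X" for X :: "('a\<times>'a) set" by (auto simp: inj_on_def)
  ultimately show ?thesis unfolding ecount_def by (simp add: card_image)
qed

lemma ecount_ge: assumes g: "graph V E" and P: "P \<subseteq> V" and Q: "Q \<subseteq> V"
  and d: "\<forall>u\<in>V. d \<le> degree E u"
  shows "card P * (d - card (V - Q)) \<le> ecount E P Q"
proof -
  have finV: "finite V" using g graph_def by auto
  have finP: "finite P" using P finV finite_subset by blast
  have eq: "{(u,v). u \<in> P \<and> v \<in> Q \<and> {u,v} \<in> E} = Sigma P (\<lambda>u. nbr E u \<inter> Q)"
    unfolding nbr_def by auto
  have "ecount E P Q = (\<Sum>u\<in>P. card (nbr E u \<inter> Q))"
    unfolding ecount_def eq using finP nbr_fin[OF g] by (simp add: card_SigmaI)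
  moreover have "d - card (V - Q) \<le> card (nbr E u \<inter> Q)" if "u \<in> P" for u
  proof -
    have "nbr E u \<subseteq> (nbr E u \<inter> Q) \<union> (V - Q)" using nbr_sub[OF g] by auto
    then have "card (nbr E u) \<le> card (nbr E u \<inter> Q) + card (V - Q)"
      by (meson card_Un_le card_mono dual_order.trans finV finite_Diff finite_Int finite_UnI nbr_fin[OF g])
    moreover have "d \<le> card (nbr E u)" using d that P deg_nbr[OF g] by auto
    ultimately show ?thesis by linarith
  qed
  ultimately show ?thesis using sum_mono[of P "\<lambda>_. d - card (V - Q)"] by (simp add: mult.commute)
qed

lemma arith1: fixes a b n d :: nat
  assumes "1 \<le> a" "a + b \<le> n" "n < 2 * d"
  shows "d \<le> a * (d - b) + b * (d - a)"
proof (cases "b = 0")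
  case True then show ?thesis using assms by simp
next
  case False
  show ?thesis
  proof (cases "d \<le> a")
    case True
    have "1 \<le> d - b" using assms True by linarith
    then have "a \<le> a * (d - b)" by simp
    then have "d \<le> a * (d - b)" using True by linarith
    then show ?thesis by linarith
  next
    case c2: False
    show ?thesis
    proof (cases "d \<le> b")
      case True
      have "1 \<le> d - a" using c2 by linarith
      then have "b \<le> b * (d - a)" by simp
      then have "d \<le> b * (d - a)" using True by linarith
      then show ?thesis by linarith
    next
      case False
      have "int (a * (d - b) + b * (d - a)) = int a * (int d - int b) + int b * (int d - int a)"
        using False c2 by (simp add: of_nat_diff)
      moreover have "int a * (int d - int b) + int b * (int d - int a) - int d = (int a - 1) * (int d - int b) + int b * (int d - int a - 1)"
        by (simp add: algebra_simps)
      moreover have "(int a - 1) * (int d - int b) \<ge> 0" using assms False by simp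
      moreover have "int b * (int d - int a - 1) \<ge> 0" using c2 by simp
      ultimately show ?thesis by linarith
    qed
  qed
qed


lemma reach_closed:
  assumes "(adj E)\<^sup>*\<^sup>* p q" "p \<in> A" "\<And>z w. z \<in> A \<Longrightarrow> adj E z w \<Longrightarrow> w \<in> A"
  shows "q \<in> A"
  using assms(1) by (induction rule: rtranclp_induct) (use assms in auto)

lemma two_le_card: assumes "finite V" "a \<in> V" "b \<in> V" "a \<noteq> b" shows "2 \<le> card V"
proof -
  have "card {a,b} = 2" using assms(4) by simp
  moreover have "card {a,b} \<le> card V" by (rule card_mono) (use assms in auto)
  ultimately show ?thesis by simp
qed

lemma two_in: assumes "2 \<le> card V" shows "\<exists>u v. u \<in> V \<and> v \<in> V \<and> u \<noteq> v"
proof -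
  have fin: "finite V" using assms card.infinite by fastforce
  have "V \<noteq> {}" using assms by auto
  then obtain u where u: "u \<in> V" by blast
  have "card (V - {u}) = card V - 1" using u fin by simp
  then have "card (V - {u}) \<noteq> 0" using assms by linarith
  then have "V - {u} \<noteq> {}" by (rule contrapos_nn) (erule ssubst, rule card.empty)
  then obtain v where "v \<in> V - {u}" by blast
  then show ?thesis using u by blast
qed

lemma two_verts_disc: "u \<in> V \<Longrightarrow> v \<in> V \<Longrightarrow> \<not> (adj E)\<^sup>*\<^sup>* u v \<Longrightarrow> \<not> connected_graph V E"
  unfolding connected_graph_def by auto

definition Kset :: "'a set \<Rightarrow> 'a set set \<Rightarrow> nat set" where
  "Kset V E = {card F | F. F \<subseteq> E \<and> \<not> connected_graph V (E - F)}"

lemma Kset_fin: "graph V E \<Longrightarrow> finite (Kset V E)"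
proof -
  assume g: "graph V E"
  have "Kset V E \<subseteq> card ` Pow E" unfolding Kset_def by auto
  moreover have "finite (card ` Pow E)" using graph_finE[OF g] by simp
  ultimately show ?thesis using finite_subset by blast
qed

lemma Kset_ne: assumes "2 \<le> card V" shows "Kset V E \<noteq> {}"
proof -
  obtain u v where uv: "u \<in> V" "v \<in> V" "u \<noteq> v"
    using two_in[OF assms] by blast
  have "\<not> (adj {})\<^sup>*\<^sup>* u v"
  proof
    assume "(adj {})\<^sup>*\<^sup>* u v"
    then have "v \<in> {u}" by (rule reach_closed) (auto simp: adj_def)
    then show False using uv by auto
  qed
  then have "\<not> connected_graph V (E - E)" using two_verts_disc[OF uv(1) uv(2)] by simp
  then show ?thesis unfolding Kset_def by blast
qed

lemma edge_conn_le: "graph V E \<Longrightarrow> 2 \<le> card V \<Longrightarrow> F \<subseteq> E \<Longrightarrow> \<not> connected_graph V (E - F) \<Longrightarrow> edge_conn V E \<le> card F"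
  using Kset_fin[of V E] unfolding edge_conn_def
  by (auto intro!: Min_le simp: Kset_def[symmetric]) (auto simp: Kset_def)

lemma edge_conn_ge:
  assumes "graph V E" "2 \<le> card V" "\<And>F. F \<subseteq> E \<Longrightarrow> \<not> connected_graph V (E - F) \<Longrightarrow> m \<le> card F"
  shows "m \<le> edge_conn V E"
proof -
  have "m \<le> Min (Kset V E)"
    using Kset_fin[OF assms(1)] Kset_ne[OF assms(2)] assms(3) by (auto intro!: Min.boundedI simp: Kset_def)
  then show ?thesis using assms(2) unfolding edge_conn_def Kset_def by auto
qed

lemma edge_conn_attained:
  assumes "graph V E" "2 \<le> card V"
  shows "\<exists>F. F \<subseteq> E \<and> \<not> connected_graph V (E - F) \<and> card F = edge_conn V E"
proof -
  have "Min (Kset V E) \<in> Kset V E" using Kset_fin[OF assms(1)] Kset_ne[OF assms(2)] by (rule Min_in)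
  then show ?thesis using assms(2) unfolding edge_conn_def Kset_def by auto
qed

lemma min_degree_le: "finite V \<Longrightarrow> u \<in> V \<Longrightarrow> min_degree V E \<le> degree E u"
  unfolding min_degree_def by auto

lemma min_degree_in: "finite V \<Longrightarrow> V \<noteq> {} \<Longrightarrow> \<exists>u\<in>V. degree E u = min_degree V E"
  unfolding min_degree_def using Min_in[of "degree E ` V"] by fastforce

lemma prod_graph: assumes "graph VG EG" "graph VH EH"
  shows "graph (prod_verts VG VH) (prod_edges EG EH)"
  unfolding graph_def
proof
  show "finite (prod_verts VG VH)" using assms unfolding graph_def prod_verts_def by auto
  show "\<forall>e\<in>prod_edges EG EH. e \<subseteq> prod_verts VG VH \<and> card e = 2"
    unfolding prod_edges_def prod_verts_def using graph_edge[OF assms(1)] graph_edge[OF assms(2)] by auto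
qed

lemma pe_intro: "{x,y} \<in> EG \<Longrightarrow> {u,v} \<in> EH \<Longrightarrow> {(x,u),(y,v)} \<in> prod_edges EG EH"
  unfolding prod_edges_def by blast

lemma pe_dest: assumes "graph VG EG" "{(x,u),(y,v)} \<in> prod_edges EG EH"
  shows "{x,y} \<in> EG \<and> {u,v} \<in> EH"
proof -
  obtain x' y' u' v' where e: "{(x,u),(y,v)} = {(x',u'),(y',v')}" "{x',y'} \<in> EG" "{u',v'} \<in> EH"
    using assms(2) unfolding prod_edges_def by blast
  then show ?thesis by (auto simp: doubleton_eq_iff insert_commute)
qed

lemma orient_inj:
  assumes "\<And>x y. (x,y) \<in> X \<Longrightarrow> (y,x) \<notin> X"
  shows "inj_on (\<lambda>((x,y),(u,v)). {(x,u),(y,v)}) (X \<times> D)"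
  unfolding inj_on_def using assms by (auto simp: doubleton_eq_iff)

lemma orient_inj2:
  assumes "\<And>x y. (x,y) \<in> X \<Longrightarrow> (y,x) \<notin> X"
  shows "inj_on (\<lambda>(x,y). {x,y}) X"
  unfolding inj_on_def using assms by (auto simp: doubleton_eq_iff)

lemma upper_deg:
  assumes gG: "graph VG EG" and gH: "graph VH EH" and x0: "x0 \<in> VG" and u0: "u0 \<in> VH"
    and u1: "u1 \<in> VH" "u1 \<noteq> u0"
  shows "edge_conn (prod_verts VG VH) (prod_edges EG EH) \<le> degree EG x0 * degree EH u0"
proof -
  let ?P = "prod_verts VG VH" and ?PE = "prod_edges EG EH"
  have gP: "graph ?P ?PE" using prod_graph[OF gG gH] .
  define F where "F = {e \<in> ?PE. (x0,u0) \<in> e}"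
  have sub: "F \<subseteq> (\<lambda>(y,v). {(x0,u0),(y,v)}) ` (nbr EG x0 \<times> nbr EH u0)"
  proof
    fix e assume "e \<in> F"
    then obtain x y u v where e: "e = {(x,u),(y,v)}" "{x,y} \<in> EG" "{u,v} \<in> EH" "(x0,u0) \<in> e"
      unfolding F_def prod_edges_def by blast
    show "e \<in> (\<lambda>(y,v). {(x0,u0),(y,v)}) ` (nbr EG x0 \<times> nbr EH u0)"
    proof (cases "(x0,u0) = (x,u)")
      case True
      then show ?thesis using e unfolding nbr_def by (auto simp: image_iff)
    next
      case False
      then have "(x0,u0) = (y,v)" using e by auto
      then show ?thesis using e unfolding nbr_def by (auto simp: image_iff insert_commute)
    qed
  qed
  have fin: "finite (nbr EG x0 \<times> nbr EH u0)" using nbr_fin[OF gG] nbr_fin[OF gH] by simp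
  have "card F \<le> card ((\<lambda>(y,v). {(x0,u0),(y,v)}) ` (nbr EG x0 \<times> nbr EH u0))"
    by (rule card_mono[OF finite_imageI[OF fin] sub])
  also have "\<dots> \<le> card (nbr EG x0 \<times> nbr EH u0)" by (rule card_image_le[OF fin])
  also have "\<dots> = degree EG x0 * degree EH u0"
    using deg_nbr[OF gG] deg_nbr[OF gH] by (simp add: card_cartesian_product)
  finally have cF: "card F \<le> degree EG x0 * degree EH u0" .
  have nr: "\<not> (adj (?PE - F))\<^sup>*\<^sup>* (x0,u0) (x0,u1)"
  proof
    assume "(adj (?PE - F))\<^sup>*\<^sup>* (x0,u0) (x0,u1)"
    then have "(x0,u1) \<in> {(x0,u0)}"
      by (rule reach_closed) (auto simp: adj_def F_def)
    then show False using u1 by auto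
  qed
  have "\<not> connected_graph ?P (?PE - F)"
    by (rule two_verts_disc[OF _ _ nr]) (use x0 u0 u1 in \<open>auto simp: prod_verts_def\<close>)
  moreover have "2 \<le> card ?P"
  proof -
    have "{(x0,u0),(x0,u1)} \<subseteq> ?P" using x0 u0 u1 by (auto simp: prod_verts_def)
    then show ?thesis using u1 gP unfolding graph_def
      by (intro two_le_card[of _ "(x0,u0)" "(x0,u1)"]) auto
  qed
  ultimately have "edge_conn ?P ?PE \<le> card F"
    using edge_conn_le[OF gP] F_def by auto
  then show ?thesis using cF by linarith
qed

lemma upper_cut:
  assumes gG: "graph VG EG" and gH: "graph VH EH" and c2: "2 \<le> card VG" and u0: "u0 \<in> VH"
  shows "edge_conn (prod_verts VG VH) (prod_edges EG EH) \<le> 2 * edge_conn VG EG * card EH"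
proof -
  let ?P = "prod_verts VG VH" and ?PE = "prod_edges EG EH"
  have gP: "graph ?P ?PE" using prod_graph[OF gG gH] .
  obtain FG where FG: "FG \<subseteq> EG" "\<not> connected_graph VG (EG - FG)" "card FG = edge_conn VG EG"
    using edge_conn_attained[OF gG c2] by blast
  have "VG \<noteq> {}" using c2 by auto
  then obtain px qx where pq: "px \<in> VG" "qx \<in> VG" "\<not> (adj (EG - FG))\<^sup>*\<^sup>* px qx"
    using FG(2) unfolding connected_graph_def by blast
  define A where "A = {z. (adj (EG - FG))\<^sup>*\<^sup>* px z}"
  define X where "X = {(x,y). {x,y} \<in> FG \<and> x \<in> A \<and> y \<notin> A}"
  define F where "F = (\<lambda>((x,y),(u,v)). {(x,u),(y,v)}) ` (X \<times> darts EH)"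
  have orX: "\<And>x y. (x,y) \<in> X \<Longrightarrow> (y,x) \<notin> X" unfolding X_def by auto
  have "card X \<le> card FG"
  proof -
    have "card X = card ((\<lambda>(x,y). {x,y}) ` X)" using orient_inj2[OF orX] by (simp add: card_image)
    also have "\<dots> \<le> card FG"
      by (rule card_mono) (use FG(1) graph_finE[OF gG] finite_subset in \<open>auto simp: X_def\<close>)
    finally show ?thesis .
  qed
  have cF: "card F \<le> 2 * edge_conn VG EG * card EH"
  proof -
    have "card F \<le> card (X \<times> darts EH)" unfolding F_def
    proof (rule card_image_le)
      have "X \<subseteq> VG \<times> VG" unfolding X_def using FG(1) graph_edge[OF gG] by auto
      then have "finite X" using gG unfolding graph_def using finite_subset by blast
      moreover have "finite (darts EH)" unfolding darts_def
        by (rule finite_subset[of _ "VH \<times> VH"]) (use graph_edge[OF gH] gH in \<open>auto simp: graph_def\<close>)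
      ultimately show "finite (X \<times> darts EH)" by simp
    qed
    also have "\<dots> = card X * (2 * card EH)" using darts_card[OF gH subset_refl] by (simp add: card_cartesian_product)
    also have "\<dots> \<le> card FG * (2 * card EH)" using \<open>card X \<le> card FG\<close> by simp
    finally show ?thesis using FG(3) by simp
  qed
  have FPE: "F \<subseteq> ?PE" unfolding F_def X_def darts_def using FG(1) by (auto intro!: pe_intro)
  have nr: "\<not> (adj (?PE - F))\<^sup>*\<^sup>* (px,u0) (qx,u0)"
  proof
    assume "(adj (?PE - F))\<^sup>*\<^sup>* (px,u0) (qx,u0)"
    then have "(qx,u0) \<in> A \<times> UNIV"
    proof (rule reach_closed)
      show "(px,u0) \<in> A \<times> UNIV" unfolding A_def by auto
      fix z w assume z: "z \<in> A \<times> UNIV" and zw: "adj (?PE - F) z w"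
      obtain x u y v where zw': "z = (x,u)" "w = (y,v)" by (cases z, cases w) auto
      have e: "{(x,u),(y,v)} \<in> ?PE" "{(x,u),(y,v)} \<notin> F" using zw zw' unfolding adj_def by auto
      have ed: "{x,y} \<in> EG" "{u,v} \<in> EH" using pe_dest[OF gG e(1)] by auto
      have xA: "x \<in> A" using z zw' by auto
      show "w \<in> A \<times> UNIV"
      proof (rule ccontr)
        assume "w \<notin> A \<times> UNIV"
        then have yA: "y \<notin> A" using zw' by auto
        show False
        proof (cases "{x,y} \<in> FG")
          case True
          then have "(x,y) \<in> X" using xA yA unfolding X_def by auto
          moreover have "(u,v) \<in> darts EH" using ed unfolding darts_def by auto
          ultimately have "{(x,u),(y,v)} \<in> F" unfolding F_def by force
          then show False using e by auto
        next
          case False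
          then have "adj (EG - FG) x y" using ed unfolding adj_def by auto
          then have "y \<in> A" using xA unfolding A_def by auto
          then show False using yA by auto
        qed
      qed
    qed
    then show False using pq(3) unfolding A_def by auto
  qed
  have "\<not> connected_graph ?P (?PE - F)"
    by (rule two_verts_disc[OF _ _ nr]) (use pq u0 in \<open>auto simp: prod_verts_def\<close>)
  moreover have "2 \<le> card ?P"
  proof -
    have "px \<noteq> qx" using pq by auto
    then have "{(px,u0),(qx,u0)} \<subseteq> ?P" using pq u0 by (auto simp: prod_verts_def)
    then show ?thesis using \<open>px \<noteq> qx\<close> gP unfolding graph_def
      by (intro two_le_card[of _ "(px,u0)" "(qx,u0)"]) auto
  qed
  ultimately have "edge_conn ?P ?PE \<le> card F"
    using edge_conn_le[OF gP _ FPE] by auto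
  then show ?thesis using cF by linarith
qed

lemma lower:
  assumes gG: "graph VG EG" and gH: "graph VH EH"
    and dH: "card VH < 2 * min_degree VH EH"
    and FPE: "F \<subseteq> prod_edges EG EH"
    and disc: "\<not> connected_graph (prod_verts VG VH) (prod_edges EG EH - F)"
    and ne: "prod_verts VG VH \<noteq> {}"
  shows "min (2 * edge_conn VG EG * card EH) (min_degree VG EG * min_degree VH EH) \<le> card F"
proof -
  let ?P = "prod_verts VG VH" and ?PE = "prod_edges EG EH"
  let ?R = "adj (?PE - F)"
  have gP: "graph ?P ?PE" using prod_graph[OF gG gH] .
  have finF: "finite F" using FPE graph_finE[OF gP] finite_subset by blast
  have finVH: "finite VH" and finVG: "finite VG" using gG gH graph_def by auto
  obtain p q where pq: "p \<in> ?P" "q \<in> ?P" "\<not> ?R\<^sup>*\<^sup>* p q"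
    using disc ne unfolding connected_graph_def by blast
  define S where "S = {z. ?R\<^sup>*\<^sup>* p z}"
  have cross: "{z,w} \<in> F" if "{z,w} \<in> ?PE" "z \<in> S" "w \<notin> S" for z w
  proof (rule ccontr)
    assume "{z,w} \<notin> F"
    then have "?R z w" using that unfolding adj_def by auto
    then have "w \<in> S" using that(2) unfolding S_def by auto
    then show False using that by auto
  qed
  define Sx where "Sx x = {u \<in> VH. (x,u) \<in> S}" for x
  have SxVH: "Sx x \<subseteq> VH" for x unfolding Sx_def by auto
  let ?d = "min_degree VH EH"
  have dle: "\<forall>u\<in>VH. ?d \<le> degree EH u" using min_degree_le[OF finVH] by auto
  show ?thesis
  proof (cases "\<exists>x\<in>VG. Sx x \<noteq> {} \<and> Sx x \<noteq> VH")
    case True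
    then obtain x where x: "x \<in> VG" "Sx x \<noteq> {}" "Sx x \<noteq> VH" by blast
    define N where "N = nbr EG x"
    define C where "C y = (\<lambda>(u,v). {(x,u),(y,v)}) `
        ({(u,v). u \<in> Sx x \<and> v \<in> VH - Sx y \<and> {u,v} \<in> EH} \<union> {(u,v). u \<in> VH - Sx x \<and> v \<in> Sx y \<and> {u,v} \<in> EH})" for y
    have CF: "C y \<subseteq> F" if "y \<in> N" for y
    proof
      fix e assume "e \<in> C y"
      then obtain u v where e: "e = {(x,u),(y,v)}" "{u,v} \<in> EH"
        "(u \<in> Sx x \<and> v \<in> VH - Sx y) \<or> (u \<in> VH - Sx x \<and> v \<in> Sx y)"
        unfolding C_def by auto
      have xy: "{x,y} \<in> EG" using that unfolding N_def nbr_def by simp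
      have ePE: "e \<in> ?PE" unfolding e(1) by (rule pe_intro[OF xy e(2)])
      have uv: "u \<in> VH" "v \<in> VH" using graph_edge[OF gH e(2)] by auto
      show "e \<in> F"
      proof (cases "u \<in> Sx x")
        case True
        then have "(x,u) \<in> S" "(y,v) \<notin> S" using e(3) unfolding Sx_def by auto
        then show ?thesis using cross ePE e(1) by auto
      next
        case False
        then have "(x,u) \<notin> S" "(y,v) \<in> S" using e(3) uv unfolding Sx_def by auto
        then show ?thesis using cross[of "(y,v)" "(x,u)"] ePE e(1) by (auto simp: insert_commute)
      qed
    qed
    have Cbound: "?d \<le> card (C y)" if y: "y \<in> N" for y
    proof -
      have xy: "x \<noteq> y" using y graph_edge[OF gG] unfolding N_def nbr_def by auto
      define E1 where "E1 = {(u,v). u \<in> Sx x \<and> v \<in> VH - Sx y \<and> {u,v} \<in> EH}"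
      define E2 where "E2 = {(u,v). u \<in> VH - Sx x \<and> v \<in> Sx y \<and> {u,v} \<in> EH}"
      have inj: "inj_on (\<lambda>(u,v). {(x,u),(y,v)}) (E1 \<union> E2)"
        unfolding inj_on_def using xy by (auto simp: doubleton_eq_iff)
      have finE: "finite E1" "finite E2"
        unfolding E1_def E2_def
        by (rule finite_subset[of _ "VH \<times> VH"]; use finVH SxVH in blast)+
      have dis: "E1 \<inter> E2 = {}" unfolding E1_def E2_def by auto
      have "card (C y) = card E1 + card E2"
        unfolding C_def E1_def[symmetric] E2_def[symmetric]
        using card_image[OF inj] card_Un_disjoint[OF finE dis] by simp
      moreover have e1: "card E1 = ecount EH (Sx x) (VH - Sx y)" unfolding E1_def ecount_def by simp
      moreover have e2: "card E2 = ecount EH (VH - Sx x) (Sx y)" unfolding E2_def ecount_def by simp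
      define a where "a = card (Sx x)"
      define b where "b = card (Sx y)"
      define n where "n = card VH"
      have cd1: "card (VH - Sx y) = n - b" "card (VH - Sx x) = n - a"
        unfolding n_def a_def b_def
        by (rule card_Diff_subset[OF finite_subset[OF SxVH finVH] SxVH])+
      have dd1: "VH - (VH - Sx y) = Sx y" "VH - (VH - Sx x) = Sx x" using SxVH by auto
      have "card (Sx x) * (?d - card (VH - (VH - Sx y))) \<le> ecount EH (Sx x) (VH - Sx y)"
        by (rule ecount_ge[OF gH SxVH Diff_subset dle])
      then have b1: "a * (?d - b) \<le> card E1" using e1 dd1 unfolding a_def b_def by simp
      have "card (Sx y) * (?d - card (VH - (VH - Sx x))) \<le> ecount EH (Sx y) (VH - Sx x)"
        by (rule ecount_ge[OF gH SxVH Diff_subset dle])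
      then have b2: "b * (?d - a) \<le> card E2" using e2 dd1 ecount_sym[of EH "Sx y"] unfolding a_def b_def by simp
      have "card (VH - Sx y) * (?d - card (VH - Sx x)) \<le> ecount EH (VH - Sx y) (Sx x)"
        by (rule ecount_ge[OF gH Diff_subset SxVH dle])
      then have b3: "(n - b) * (?d - (n - a)) \<le> card E1" using e1 cd1 ecount_sym[of EH "VH - Sx y"] by simp
      have "card (VH - Sx x) * (?d - card (VH - Sx y)) \<le> ecount EH (VH - Sx x) (Sx y)"
        by (rule ecount_ge[OF gH Diff_subset SxVH dle])
      then have b4: "(n - a) * (?d - (n - b)) \<le> card E2" using e2 cd1 by simp
      have finSx: "finite (Sx z)" for z by (rule finite_subset[OF SxVH finVH])
      have "card (Sx x) \<noteq> 0" using x(2) finSx[of x] by simp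
      then have a1: "1 \<le> a" unfolding a_def by simp
      have "Sx x \<subset> VH" using x(3) SxVH[of x] by blast
      then have an: "a < n" unfolding a_def n_def by (rule psubset_card_mono[OF finVH])
      have bn: "b \<le> n" unfolding b_def n_def by (rule card_mono[OF finVH SxVH])
      have dn: "n < 2 * ?d" using dH n_def by simp
      show ?thesis
      proof (cases "a + b \<le> n")
        case True
        then show ?thesis using arith1[OF a1 True dn] b1 b2 \<open>card (C y) = card E1 + card E2\<close> by linarith
      next
        case False
        have "1 \<le> n - a" "(n - a) + (n - b) \<le> n" using an bn False by auto
        from arith1[OF this dn] have "?d \<le> (n - a) * (?d - (n - b)) + (n - b) * (?d - (n - a))" .
        then show ?thesis using b3 b4 \<open>card (C y) = card E1 + card E2\<close> by linarith
      qed
    qed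
    have finN: "finite N" unfolding N_def using nbr_fin[OF gG] .
    have finC: "finite (C y)" if "y \<in> N" for y using CF[OF that] finF finite_subset by blast
    have disC: "C y \<inter> C y' = {}" if "y \<in> N" "y' \<in> N" "y \<noteq> y'" for y y'
    proof -
      have "x \<noteq> y" "x \<noteq> y'" using that graph_edge[OF gG] unfolding N_def nbr_def by auto
      then show ?thesis using that(3) unfolding C_def by (auto simp: doubleton_eq_iff)
    qed
    have "card (\<Union>y\<in>N. C y) = (\<Sum>y\<in>N. card (C y))"
      by (rule card_UN_disjoint[OF finN]) (use finC disC in auto)
    moreover have "(\<Sum>y\<in>N. card (C y)) \<ge> card N * ?d"
      using sum_mono[of N "\<lambda>_. ?d" "\<lambda>y. card (C y)"] Cbound by simp
    moreover have "card (\<Union>y\<in>N. C y) \<le> card F"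
      by (rule card_mono[OF finF]) (use CF in auto)
    ultimately have cN: "card N * ?d \<le> card F" by linarith
    have "card N = degree EG x" unfolding N_def using deg_nbr[OF gG] by simp
    moreover have "min_degree VG EG \<le> degree EG x" using min_degree_le[OF finVG x(1)] .
    ultimately have "min_degree VG EG * ?d \<le> card N * ?d" by simp
    then have "min_degree VG EG * ?d \<le> card F" using cN by linarith
    then show ?thesis by linarith
  next
    case False
    then have nomix: "\<And>x. x \<in> VG \<Longrightarrow> Sx x = {} \<or> Sx x = VH" by blast
    define A where "A = {x \<in> VG. Sx x = VH}"
    obtain px pu where p: "p = (px,pu)" by (cases p)
    obtain qx qu where q: "q = (qx,qu)" by (cases q)
    have pS: "p \<in> S" unfolding S_def by auto
    have pA: "px \<in> A" using pS p pq(1) nomix unfolding A_def Sx_def prod_verts_def by blast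
    have qS: "q \<notin> S" using pq(3) unfolding S_def by auto
    have qA: "qx \<notin> A" using qS q pq(2) unfolding A_def Sx_def prod_verts_def by blast
    have yS: "(y,v) \<notin> S" if "y \<in> VG" "y \<notin> A" "v \<in> VH" for y v
      using nomix[OF that(1)] that unfolding A_def Sx_def by auto
    have xS: "(x,u) \<in> S" if "x \<in> A" "u \<in> VH" for x u
      using that unfolding A_def Sx_def by auto
    define X where "X = {(x,y). {x,y} \<in> EG \<and> x \<in> A \<and> y \<notin> A}"
    define FG where "FG = (\<lambda>(x,y). {x,y}) ` X"
    have orX: "\<And>x y. (x,y) \<in> X \<Longrightarrow> (y,x) \<notin> X" unfolding X_def by auto
    have cX: "card X = card FG" unfolding FG_def using orient_inj2[OF orX] by (simp add: card_image)
    have FGsub: "FG \<subseteq> EG" unfolding FG_def X_def by auto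
    have nr: "\<not> (adj (EG - FG))\<^sup>*\<^sup>* px qx"
    proof
      assume "(adj (EG - FG))\<^sup>*\<^sup>* px qx"
      then have "qx \<in> A"
      proof (rule reach_closed)
        show "px \<in> A" by (rule pA)
        fix z w assume z: "z \<in> A" and zw: "adj (EG - FG) z w"
        show "w \<in> A"
        proof (rule ccontr)
          assume "w \<notin> A"
          then have "(z,w) \<in> X" using z zw unfolding X_def adj_def by auto
          then have "{z,w} \<in> FG" unfolding FG_def by force
          then show False using zw unfolding adj_def by auto
        qed
      qed
      then show False using qA by auto
    qed
    have pxV: "px \<in> VG" "qx \<in> VG" using pq p q unfolding prod_verts_def by auto
    have dG: "\<not> connected_graph VG (EG - FG)" by (rule two_verts_disc[OF pxV nr])
    have c2: "2 \<le> card VG"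
    proof -
      have "px \<noteq> qx" using pA qA by auto
      then show ?thesis using two_le_card[OF finVG pxV] by simp
    qed
    have kG: "edge_conn VG EG \<le> card FG" by (rule edge_conn_le[OF gG c2 FGsub dG])
    define Cc where "Cc = (\<lambda>((x,y),(u,v)). {(x,u),(y,v)}) ` (X \<times> darts EH)"
    have CcF: "Cc \<subseteq> F"
    proof
      fix e assume "e \<in> Cc"
      then obtain x y u v where e: "e = {(x,u),(y,v)}" "(x,y) \<in> X" "(u,v) \<in> darts EH"
        unfolding Cc_def by auto
      have ed: "{x,y} \<in> EG" "x \<in> A" "y \<notin> A" "{u,v} \<in> EH" using e unfolding X_def darts_def by auto
      have "y \<in> VG" "u \<in> VH" "v \<in> VH" using graph_edge[OF gG ed(1)] graph_edge[OF gH ed(4)] by auto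
      then have "(x,u) \<in> S" "(y,v) \<notin> S" using xS yS ed by auto
      then show "e \<in> F" using cross pe_intro[OF ed(1) ed(4)] e(1) by auto
    qed
    have "card Cc = card X * (2 * card EH)"
      unfolding Cc_def using card_image[OF orient_inj[OF orX, of "darts EH"]] darts_card[OF gH subset_refl]
      by (simp add: card_cartesian_product)
    moreover have "card Cc \<le> card F" using card_mono[OF finF CcF] .
    ultimately have h1: "card FG * (2 * card EH) \<le> card F" using cX by simp
    have h2: "edge_conn VG EG * (2 * card EH) \<le> card FG * (2 * card EH)" by (rule mult_le_mono1[OF kG])
    have "2 * edge_conn VG EG * card EH = edge_conn VG EG * (2 * card EH)" by simp
    then have "2 * edge_conn VG EG * card EH \<le> card F" using h1 h2 by linarith
    then show ?thesis by linarith
  qed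
qed

theorem theorem1:
  fixes VG :: "'a set" and EG :: "'a set set" and VH :: "'b set" and EH :: "'b set set"
  assumes "graph VG EG" and "VG \<noteq> {}"
    and "graph VH EH" and "VH \<noteq> {}"
    and "real (min_degree VH EH) > real (card VH) / 2"
  shows "edge_conn (prod_verts VG VH) (prod_edges EG EH) =
           min (2 * edge_conn VG EG * card EH) (min_degree VG EG * min_degree VH EH)"
proof -
  note gG = assms(1) and gH = assms(3)
  let ?P = "prod_verts VG VH" and ?PE = "prod_edges EG EH"
  have gP: "graph ?P ?PE" using prod_graph[OF gG gH] .
  have finVH: "finite VH" and finVG: "finite VG" using gG gH graph_def by auto
  have dH: "card VH < 2 * min_degree VH EH" using assms(5) by linarith
  obtain u0 where u0: "u0 \<in> VH" "degree EH u0 = min_degree VH EH"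
    using min_degree_in[OF finVH assms(4)] by blast
  obtain x0 where x0: "x0 \<in> VG" "degree EG x0 = min_degree VG EG"
    using min_degree_in[OF finVG assms(2)] by blast
  have "card VH \<ge> 1" using finVH assms(4) by (simp add: Suc_leI card_gt_0_iff)
  then have "degree EH u0 \<ge> 1" using dH u0 by linarith
  then have "nbr EH u0 \<noteq> {}" using deg_nbr[OF gH] by fastforce
  then obtain u1 where "u1 \<in> nbr EH u0" by blast
  then have u1: "u1 \<in> VH" "u1 \<noteq> u0" using graph_edge[OF gH] unfolding nbr_def by auto
  have up1: "edge_conn ?P ?PE \<le> min_degree VG EG * min_degree VH EH"
    using upper_deg[OF gG gH x0(1) u0(1) u1] x0 u0 by simp
  have up2: "edge_conn ?P ?PE \<le> 2 * edge_conn VG EG * card EH"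
  proof (cases "2 \<le> card VG")
    case True
    then show ?thesis using upper_cut[OF gG gH True u0(1)] by simp
  next
    case False
    have "nbr EG x0 = {}"
    proof (rule ccontr)
      assume "nbr EG x0 \<noteq> {}"
      then obtain y where "y \<in> nbr EG x0" by blast
      then have yy: "y \<in> VG" "x0 \<noteq> y" using graph_edge[OF gG] unfolding nbr_def by auto
      have "2 \<le> card VG" by (rule two_le_card[OF finVG x0(1) yy])
      then show False using False by simp
    qed
    then have "min_degree VG EG = 0" using x0 deg_nbr[OF gG] by simp
    then show ?thesis using up1 by simp
  qed
  have c2: "2 \<le> card ?P"
  proof -
    have "{(x0,u0),(x0,u1)} \<subseteq> ?P" using x0 u0 u1 by (auto simp: prod_verts_def)
    then show ?thesis using u1 gP unfolding graph_def
      by (intro two_le_card[of _ "(x0,u0)" "(x0,u1)"]) auto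
  qed
  have ne: "?P \<noteq> {}" using x0 u0 by (auto simp: prod_verts_def)
  have lo: "min (2 * edge_conn VG EG * card EH) (min_degree VG EG * min_degree VH EH) \<le> edge_conn ?P ?PE"
    by (rule edge_conn_ge[OF gP c2]) (rule lower[OF gG gH dH _ _ ne])
  show ?thesis using lo up1 up2 by linarith
qed

end
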